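(* Let $\mu>0$, $\lambda\ge0$, $k_M\in\mathbb{R}$, and let $k$ be the solution of $$k''=-\tfrac12k^3-\lambda k+\mu,\qquad k(0)=k_M,\quad k'(0)=0.$$ Assume $k$ is nonconstant and $k_M=\max k$. Then $k$ is defined and bounded on all of $\mathbb{R}$, and there exist real constants $\alpha,\beta,\gamma$ with $\gamma\in(-1,0)$, $\omega>0$ and $m\in(0,1)$ such that $$k(s)=\frac{\alpha\,\mathrm{cn}(\omega s\mid m)+\beta}{\gamma\,\mathrm{cn}(\omega s\mid m)+1}\qquad\text{for all }s\in\mathbb{R},$$ where $\mathrm{cn}(\cdot\mid m)$ is the Jacobi elliptic cosine function with parameter $m$.
   Context: The Jacobi elliptic function $y(u)=\mathrm{cn}(u\mid m)$, $m\in(0,1)$, is the solution of $(y')^2=(1-y^2)(1-m+my^2)$ with $y(0)=1$ (equivalently $\mathrm{cn}(u\mid m)=\cos\varphi$ where $u=\int_0^\varphi(1-m\sin^2\psi)^{-1/2}d\psi$). *)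

theory Defs
  imports "HOL-Analysis.Analysis"
begin

definition elliptic_F :: "real \<Rightarrow> real \<Rightarrow> real" where
  "elliptic_F m phi =
     (if 0 \<le> phi then integral {0..phi} (\<lambda>psi. 1 / sqrt (1 - m * (sin psi)\<^sup>2))
      else - integral {phi..0} (\<lambda>psi. 1 / sqrt (1 - m * (sin psi)\<^sup>2)))"

definition jacobi_am :: "real \<Rightarrow> real \<Rightarrow> real" where
  "jacobi_am m u = (THE phi. elliptic_F m phi = u)"

definition jacobi_cn :: "real \<Rightarrow> real \<Rightarrow> real" where
  "jacobi_cn m u = cos (jacobi_am m u)"

definition curv_ode_sol ::
  "real \<Rightarrow> real \<Rightarrow> real \<Rightarrow> (real \<Rightarrow> real) \<Rightarrow> (real \<Rightarrow> real) \<Rightarrow> real set \<Rightarrow> bool" where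
  "curv_ode_sol mu lam kM k dk I \<longleftrightarrow>
     open I \<and> is_interval I \<and> 0 \<in> I \<and> k 0 = kM \<and> dk 0 = 0 \<and>
     (\<forall>s\<in>I. (k has_real_derivative dk s) (at s)) \<and>
     (\<forall>s\<in>I. (dk has_real_derivative (- ((k s) ^ 3) / 2 - lam * k s + mu)) (at s))"

definition curv_ode_maximal_sol ::
  "real \<Rightarrow> real \<Rightarrow> real \<Rightarrow> (real \<Rightarrow> real) \<Rightarrow> (real \<Rightarrow> real) \<Rightarrow> real set \<Rightarrow> bool" where
  "curv_ode_maximal_sol mu lam kM k dk I \<longleftrightarrow>
     curv_ode_sol mu lam kM k dk I \<and>
     (\<forall>h dh J. curv_ode_sol mu lam kM h dh J \<longrightarrow> J \<subseteq> I)"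

end

theory Submission
  imports Defs
begin

lemma poly_id:
  fixes a b l A B c al be ga m w2 :: real
  assumes hA: "A^2 = a^2 + a*(a+b) + (4*l + (a+b)^2 - a*b)"
      and hB: "B^2 = b^2 + b*(a+b) + (4*l + (a+b)^2 - a*b)"
      and hal: "(A+B)*al = a*B - b*A" and hbe: "(A+B)*be = a*B + b*A" and hga: "(A+B)*ga = B - A"
      and hm: "4*A*B*m = (a-b)^2 - (A-B)^2" and hw: "4*w2 = A*B"
  shows "16*(A+B)^3 * (- w2 * (al - be*ga) * ((c * (1 - m*(1-c^2)) - m * (1-c^2) * c) * (ga*c+1) + 2*ga*(1-c^2)*(1 - m*(1-c^2))))
       = 16*(A+B)^3 * (- ((al*c+be)^3)/2 - l*(al*c+be)*(ga*c+1)^2 + (a+b)*(4*l+(a+b)^2-2*a*b)/8 * (ga*c+1)^3)"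
  using assms by algebra

lemma rhs_aux:
  fixes N d l mu :: real assumes "d \<noteq> 0"
  shows "- ((N/d)^3)/2 - l*(N/d) + mu = (- (N^3)/2 - l*N*d^2 + mu*d^3)/d^3"
  using assms by (simp add: field_simps power2_eq_square power3_eq_cube)

lemma param_ode:
  fixes a b l A B c m w S Q al be ga :: real
  assumes hA: "A^2 = a^2 + a*(a+b) + (4*l + (a+b)^2 - a*b)"
      and hB: "B^2 = b^2 + b*(a+b) + (4*l + (a+b)^2 - a*b)"
      and AB: "A > 0" "B > 0"
      and al: "al = (a*B - b*A)/(A+B)" and be: "be = (a*B + b*A)/(A+B)" and ga: "ga = (B-A)/(A+B)"
      and m: "m = ((a-b)^2 - (A-B)^2)/(4*A*B)"
      and hw: "w^2 = A*B/4" and D: "ga*c + 1 \<noteq> 0" and S: "S = 1 - c^2" and Q: "Q = 1 - m*S"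
  shows "- (w^2) * (al - be*ga) * ((c * Q - m * S * c) * (ga*c+1) + 2*ga*S*Q) / (ga*c+1)^3
       = - (((al*c+be)/(ga*c+1))^3)/2 - l*((al*c+be)/(ga*c+1)) + (a+b)*(4*l+(a+b)^2-2*a*b)/8"
proof -
  have P0: "A + B \<noteq> 0" using AB by simp
  have h1: "(A+B)*al = a*B - b*A" "(A+B)*be = a*B + b*A" "(A+B)*ga = B - A"
    using P0 by (simp_all add: al be ga)
  have h2: "4*A*B*m = (a-b)^2 - (A-B)^2" using AB by (simp add: m)
  have h3: "4*(w^2) = A*B" using hw by simp
  have nz: "16*(A+B)^3 \<noteq> (0::real)" using P0 by simp
  have eq: "16*(A+B)^3 * (- (w^2) * (al - be*ga) * ((c * (1 - m*(1-c^2)) - m * (1-c^2) * c) * (ga*c+1) + 2*ga*(1-c^2)*(1 - m*(1-c^2))))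
       = 16*(A+B)^3 * (- ((al*c+be)^3)/2 - l*(al*c+be)*(ga*c+1)^2 + (a+b)*(4*l+(a+b)^2-2*a*b)/8 * (ga*c+1)^3)"
    by (rule poly_id[OF hA hB h1 h2 h3])
  have X: "- (w^2) * (al - be*ga) * ((c * Q - m * S * c) * (ga*c+1) + 2*ga*S*Q)
       = - ((al*c+be)^3)/2 - l*(al*c+be)*(ga*c+1)^2 + (a+b)*(4*l+(a+b)^2-2*a*b)/8 * (ga*c+1)^3"
    unfolding S Q by (rule mult_left_cancel[OF nz, THEN iffD1, OF eq])
  show ?thesis unfolding X using rhs_aux[OF D, of "al*c+be" l "(a+b)*(4*l+(a+b)^2-2*a*b)/8"] by simp
qed

lemma params:
  fixes kM km lam A B :: real
  assumes l: "lam \<ge> 0" and p: "kM > 0" "-kM < km" "km < kM"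
    and Adef: "A = sqrt (kM^2 + kM*(kM+km) + (4*lam + (kM+km)^2 - kM*km))"
    and Bdef: "B = sqrt (km^2 + km*(kM+km) + (4*lam + (kM+km)^2 - kM*km))"
  shows "A > 0" "B > 0" "A^2 = kM^2 + kM*(kM+km) + (4*lam + (kM+km)^2 - kM*km)"
    "B^2 = km^2 + km*(kM+km) + (4*lam + (kM+km)^2 - kM*km)" "B < A"
    "0 < ((kM-km)^2 - (A-B)^2)/(4*A*B)" "((kM-km)^2 - (A-B)^2)/(4*A*B) < 1"
proof -
  define sz where "sz = kM + km"
  have sz: "sz > 0" using p by (simp add: sz_def)
  have rA: "kM^2 + kM*(kM+km) + (4*lam + (kM+km)^2 - kM*km) = 2*kM^2 + sz^2 + 4*lam"
    by (simp add: sz_def power2_eq_square algebra_simps)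
  have rB: "km^2 + km*(kM+km) + (4*lam + (kM+km)^2 - kM*km) = 2*km^2 + sz^2 + 4*lam"
    by (simp add: sz_def power2_eq_square algebra_simps)
  have s02: "sz^2 > 0" using sz by simp
  have A': "A = sqrt (2*kM^2 + sz^2 + 4*lam)" using Adef rA by simp
  have B': "B = sqrt (2*km^2 + sz^2 + 4*lam)" using Bdef rB by simp
  have radA: "2*kM^2 + sz^2 + 4*lam > 0" using s02 l zero_le_power2[of kM] by linarith
  have radB: "2*km^2 + sz^2 + 4*lam > 0" using s02 l zero_le_power2[of km] by linarith
  show Ap: "A > 0" using radA A' by simp
  show Bp: "B > 0" using radB B' by simp
  have A2: "A^2 = 2*kM^2 + sz^2 + 4*lam" using radA A' by simp
  have B2: "B^2 = 2*km^2 + sz^2 + 4*lam" using radB B' by simp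
  show "A^2 = kM^2 + kM*(kM+km) + (4*lam + (kM+km)^2 - kM*km)" using A2 rA by simp
  show "B^2 = km^2 + km*(kM+km) + (4*lam + (kM+km)^2 - kM*km)" using B2 rB by simp
  have kk: "km^2 < kM^2"
  proof -
    have "(kM - km) * (kM + km) > 0" using p by simp
    then show ?thesis by (simp add: power2_eq_square algebra_simps)
  qed
  show BA: "B < A" unfolding A' B' using kk by simp
  have sA: "sz < A" unfolding A' by (intro real_less_rsqrt) (use l kk zero_le_power2[of km] in linarith)
  have sB: "sz \<le> B" unfolding B' using l by (intro real_le_rsqrt) simp
  have kA: "kM < A" unfolding A' by (intro real_less_rsqrt) (use l s02 zero_le_power2[of kM] in linarith)
  have kB: "-km < B" unfolding B' by (intro real_less_rsqrt) (use l s02 zero_le_power2[of km] in \<open>simp only: power2_minus; linarith\<close>)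
  have diff: "(A-B)*(A+B) = 2*(kM-km)* sz"
  proof -
    have "(A-B)*(A+B) = A^2 - B^2" by (simp add: power2_eq_square algebra_simps)
    also have "\<dots> = 2*(kM^2 - km^2)" using A2 B2 by simp
    also have "\<dots> = 2*(kM-km)* sz" by (simp add: sz_def power2_eq_square algebra_simps)
    finally show ?thesis .
  qed
  have "2*(kM-km)* sz < (kM-km)*(A+B)"
  proof -
    have "2* sz < A+B" using sA sB by simp
    then have "(kM-km)*(2* sz) < (kM-km)*(A+B)" using p by (intro mult_strict_left_mono) auto
    then show ?thesis by (simp add: algebra_simps)
  qed
  then have "(A-B)*(A+B) < (kM-km)*(A+B)" using diff by simp
  then have AB1: "A - B < kM - km" using Ap Bp by (simp add: mult_less_cancel_right)
  have "(A-B)^2 < (kM-km)^2" using AB1 BA by (intro power_strict_mono) auto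
  then have num: "0 < (kM-km)^2 - (A-B)^2" by simp
  have den: "0 < 4*A*B" using Ap Bp by simp
  show "0 < ((kM-km)^2 - (A-B)^2)/(4*A*B)" using num den by simp
  have "kM - km < A + B" using kA kB by simp
  then have "(kM-km)^2 < (A+B)^2" using p by (intro power_strict_mono) auto
  then have "(kM-km)^2 - (A-B)^2 < 4*A*B" by (simp add: power2_eq_square algebra_simps)
  then show "((kM-km)^2 - (A-B)^2)/(4*A*B) < 1" using den by simp
qed

definition ef :: "real \<Rightarrow> real \<Rightarrow> real" where "ef m x = 1 / sqrt (1 - m * (sin x)^2)"

lemma rad_pos: fixes m x :: real assumes "m < 1" shows "0 < 1 - m * (sin x)^2"
proof (cases "m \<ge> 0")
  case True
  have s1: "(sin x)^2 \<le> 1" using sin_cos_squared_add[of x] zero_le_power2[of "cos x"] by linarith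
  have "m * (sin x)^2 \<le> m * 1" using True s1 by (intro mult_left_mono) auto
  then show ?thesis using assms by linarith
next
  case False
  then have "m * (sin x)^2 \<le> 0" by (simp add: mult_nonpos_nonneg)
  then show ?thesis by linarith
qed

lemma ef_pos: "m < 1 \<Longrightarrow> ef m x > 0"
  using rad_pos[of m x] by (simp add: ef_def)

lemma ef_ge1: assumes "0 \<le> m" "m < 1" shows "ef m x \<ge> 1"
proof -
  have "1 - m * (sin x)^2 \<le> 1" using assms by simp
  then have "sqrt (1 - m * (sin x)^2) \<le> 1" by simp
  moreover have "sqrt (1 - m * (sin x)^2) > 0" using rad_pos[OF assms(2)] by simp
  ultimately show ?thesis by (simp add: ef_def)
qed

lemma ef_cont: "m < 1 \<Longrightarrow> continuous_on S (ef m)"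
  unfolding ef_def using rad_pos[of m]
  by (intro continuous_intros) (auto simp: less_imp_neq[symmetric])

lemma F_alt: "elliptic_F m phi = (if 0 \<le> phi then integral {0..phi} (ef m) else - integral {phi..0} (ef m))"
  by (simp add: elliptic_F_def ef_def[abs_def])

lemma F_deriv: assumes "m < 1" shows "(elliptic_F m has_real_derivative ef m x) (at x)"
proof -
  define n where "n = \<bar>x\<bar> + 1"
  define G where "G y = integral {-n..y} (ef m) - integral {-n..0} (ef m)" for y
  have int: "ef m integrable_on {a..b}" for a b
    by (rule integrable_continuous_interval[OF ef_cont[OF assms]])
  have n0: "n > 0" by (simp add: n_def)
  have eq: "elliptic_F m y = G y" if "-n < y" for y
  proof (cases "0 \<le> y")
    case True
    have "integral {-n..0} (ef m) + integral {0..y} (ef m) = integral {-n..y} (ef m)"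
      by (rule Henstock_Kurzweil_Integration.integral_combine) (use True n0 int in auto)
    thus ?thesis using True by (simp add: F_alt G_def)
  next
    case False
    have "integral {-n..y} (ef m) + integral {y..0} (ef m) = integral {-n..0} (ef m)"
      by (rule Henstock_Kurzweil_Integration.integral_combine) (use False that int in auto)
    thus ?thesis using False by (simp add: F_alt G_def)
  qed
  have "((\<lambda>y. integral {-n..y} (ef m)) has_real_derivative ef m x) (at x within {-n..n})"
    by (rule integral_has_real_derivative[OF ef_cont[OF assms]]) (auto simp: n_def)
  then have "((\<lambda>y. integral {-n..y} (ef m)) has_real_derivative ef m x) (at x)"
    using at_within_Icc_at[of "-n" x n] by (simp add: n_def)
  then have "(G has_real_derivative ef m x) (at x)"
    unfolding G_def by (auto intro!: derivative_eq_intros)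
  then show ?thesis
    by (rule has_field_derivative_transform_within_open[where S="{-n<..}"]) (auto simp: eq n_def)
qed

lemma F_zero[simp]: "elliptic_F m 0 = 0" by (simp add: F_alt)

lemma F_cont: "m < 1 \<Longrightarrow> isCont (elliptic_F m) x"
  using F_deriv DERIV_isCont by blast

lemma F_strict: assumes "m < 1" "a < b" shows "elliptic_F m a < elliptic_F m b"
  using assms(2) by (rule DERIV_pos_imp_increasing) (use F_deriv[OF assms(1)] ef_pos[OF assms(1)] in blast)

lemma F_inj: "m < 1 \<Longrightarrow> elliptic_F m a = elliptic_F m b \<Longrightarrow> a = b"
  using F_strict[of m a b] F_strict[of m b a] by (cases a b rule: linorder_cases) auto

lemma F_ge: assumes "0 \<le> m" "m < 1" "0 \<le> p" shows "p \<le> elliptic_F m p"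
proof -
  have d: "((\<lambda>a. elliptic_F m a - a) has_real_derivative ef m x - 1) (at x)" for x
    by (rule DERIV_diff[OF F_deriv[OF assms(2)] DERIV_ident])
  have "(\<lambda>x. elliptic_F m x - x) 0 \<le> (\<lambda>x. elliptic_F m x - x) p"
    using assms(3) by (rule DERIV_nonneg_imp_nondecreasing)
      (use d ef_ge1[OF assms(1,2)] in \<open>meson diff_ge_0_iff_ge\<close>)
  then show ?thesis by simp
qed

lemma F_le: assumes "0 \<le> m" "m < 1" "p \<le> 0" shows "elliptic_F m p \<le> p"
proof -
  have d: "((\<lambda>a. elliptic_F m a - a) has_real_derivative ef m x - 1) (at x)" for x
    by (rule DERIV_diff[OF F_deriv[OF assms(2)] DERIV_ident])
  have "(\<lambda>x. elliptic_F m x - x) p \<le> (\<lambda>x. elliptic_F m x - x) 0"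
    using assms(3) by (rule DERIV_nonneg_imp_nondecreasing)
      (use d ef_ge1[OF assms(1,2)] in \<open>meson diff_ge_0_iff_ge\<close>)
  then show ?thesis by simp
qed

lemma F_surj: assumes "0 \<le> m" "m < 1" shows "\<exists>p. elliptic_F m p = u"
proof (cases "0 \<le> u")
  case True
  then show ?thesis using IVT[of "elliptic_F m" 0 u u] F_ge[OF assms True] F_cont[OF assms(2)] by auto
next
  case False
  then show ?thesis using IVT[of "elliptic_F m" u u 0] F_le[OF assms, of u] F_cont[OF assms(2)] by auto
qed

lemma am_F: assumes "0 \<le> m" "m < 1" shows "elliptic_F m (jacobi_am m u) = u"
proof -
  have "\<exists>!p. elliptic_F m p = u" using F_surj[OF assms] F_inj[OF assms(2)] by blast
  then show ?thesis unfolding jacobi_am_def by (rule theI')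
qed

lemma am_inv: assumes "0 \<le> m" "m < 1" shows "jacobi_am m (elliptic_F m p) = p"
  using am_F[OF assms, of "elliptic_F m p"] F_inj[OF assms(2)] by blast

lemma am_zero: assumes "0 \<le> m" "m < 1" shows "jacobi_am m 0 = 0"
  using am_inv[OF assms, of 0] by simp

lemma am_deriv: assumes "0 \<le> m" "m < 1"
  shows "(jacobi_am m has_real_derivative sqrt (1 - m * (sin (jacobi_am m u))^2)) (at u)"
proof -
  have cont: "isCont (jacobi_am m) u"
    using isCont_inverse_function[of 1 "jacobi_am m u" "jacobi_am m" "elliptic_F m"]
      am_inv[OF assms] F_cont[OF assms(2)] am_F[OF assms] by auto
  have "(jacobi_am m has_real_derivative inverse (ef m (jacobi_am m u))) (at u)"
    by (rule DERIV_inverse_function[where a="u-1" and b="u+1"])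
       (use F_deriv[OF assms(2)] ef_pos[OF assms(2)] am_F[OF assms] cont in \<open>auto simp: less_imp_neq[symmetric]\<close>)
  then show ?thesis by (simp add: ef_def)
qed

definition sn :: "real \<Rightarrow> real \<Rightarrow> real" where "sn m u = sin (jacobi_am m u)"
definition dn :: "real \<Rightarrow> real \<Rightarrow> real" where "dn m u = sqrt (1 - m * (sn m u)^2)"

lemma cn_sn: "(jacobi_cn m u)^2 = 1 - (sn m u)^2"
  using sin_cos_squared_add[of "jacobi_am m u"] by (simp add: jacobi_cn_def sn_def cos_squared_eq)

lemma dn_pos: "m < 1 \<Longrightarrow> dn m u > 0"
  using rad_pos[of m "jacobi_am m u"] by (simp add: dn_def sn_def)

lemma dn_sq: "m < 1 \<Longrightarrow> (dn m u)^2 = 1 - m * (sn m u)^2"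
  using rad_pos[of m "jacobi_am m u"] by (simp add: dn_def sn_def)

lemma cn_abs: "\<bar>jacobi_cn m u\<bar> \<le> 1" by (simp add: jacobi_cn_def)

lemma cn_zero: "0 \<le> m \<Longrightarrow> m < 1 \<Longrightarrow> jacobi_cn m 0 = 1"
  by (simp add: jacobi_cn_def am_zero)
lemma sn_zero: "0 \<le> m \<Longrightarrow> m < 1 \<Longrightarrow> sn m 0 = 0"
  by (simp add: sn_def am_zero)

lemma cn_deriv: assumes "0 \<le> m" "m < 1"
  shows "(jacobi_cn m has_real_derivative - sn m u * dn m u) (at u)"
proof -
  have e: "jacobi_cn m = (\<lambda>u. cos (jacobi_am m u))" by (simp add: fun_eq_iff jacobi_cn_def)
  show ?thesis unfolding e using am_deriv[OF assms, of u]
    by (auto intro!: derivative_eq_intros simp: sn_def dn_def)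
qed

lemma sn_deriv: assumes "0 \<le> m" "m < 1"
  shows "(sn m has_real_derivative jacobi_cn m u * dn m u) (at u)"
proof -
  have e: "sn m = (\<lambda>u. sin (jacobi_am m u))" by (simp add: fun_eq_iff sn_def)
  show ?thesis unfolding e using am_deriv[OF assms, of u]
    by (auto intro!: derivative_eq_intros simp: jacobi_cn_def sn_def dn_def)
qed

lemma dn_deriv: assumes "0 \<le> m" "m < 1"
  shows "(dn m has_real_derivative - m * sn m u * jacobi_cn m u) (at u)"
proof -
  have e: "dn m = (\<lambda>u. sqrt (1 - m * (sn m u * sn m u)))" by (simp add: fun_eq_iff dn_def power2_eq_square)
  have p: "0 < 1 - m * (sn m u * sn m u)" using rad_pos[OF assms(2)] by (simp add: sn_def power2_eq_square)
  have r: "sqrt (1 - m * (sn m u * sn m u)) = dn m u" by (simp add: dn_def power2_eq_square)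
  have inner: "((\<lambda>u. 1 - m * (sn m u * sn m u)) has_real_derivative
      0 - m * (jacobi_cn m u * dn m u * sn m u + jacobi_cn m u * dn m u * sn m u)) (at u)"
    by (rule DERIV_diff[OF DERIV_const DERIV_cmult[OF DERIV_mult[OF sn_deriv[OF assms] sn_deriv[OF assms]]]])
  have H: "((\<lambda>u. sqrt (1 - m * (sn m u * sn m u))) has_real_derivative inverse (sqrt (1 - m * (sn m u * sn m u))) / 2 *
      (0 - m * (jacobi_cn m u * dn m u * sn m u + jacobi_cn m u * dn m u * sn m u))) (at u)"
    by (rule DERIV_chain2[OF DERIV_real_sqrt[OF p] inner])
  have "(dn m has_real_derivative inverse (sqrt (1 - m * (sn m u * sn m u))) / 2 *
      (0 - m * (jacobi_cn m u * dn m u * sn m u + jacobi_cn m u * dn m u * sn m u))) (at u)"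
    using H unfolding e[symmetric] .
  moreover have "inverse (sqrt (1 - m * (sn m u * sn m u))) / 2 *
      (0 - m * (jacobi_cn m u * dn m u * sn m u + jacobi_cn m u * dn m u * sn m u)) = - m * sn m u * jacobi_cn m u"
    unfolding r using dn_pos[OF assms(2), of u] by (simp add: field_simps)
  ultimately show ?thesis by (rule DERIV_cong)
qed

lemma kalg:
  fixes al be ga c S Q w :: real
  shows "(al * (- S * Q * w) + 0) * (ga * c + 1) - (al * c + be) * (ga * (- S * Q * w) + 0)
     = (- w * (al - be * ga)) * (S * Q)"
  by algebra

lemma qalg2:
  fixes c S Q w P ga m :: real
  assumes D: "ga * c + 1 \<noteq> 0"
  shows "((- w * P) * (c * Q * w * Q + - m * S * c * w * S) * ((ga * c + 1) * (ga * c + 1))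
          - (- w * P) * (S * Q) * ((ga * (- S * Q * w) + 0) * (ga * c + 1) + (ga * (- S * Q * w) + 0) * (ga * c + 1)))
         / (((ga * c + 1) * (ga * c + 1)) * ((ga * c + 1) * (ga * c + 1)))
       = - (w^2) * P * ((c * Q^2 - m * S^2 * c) * (ga * c + 1) + 2 * ga * S^2 * Q^2) / (ga * c + 1)^3"
proof -
  define Z where "Z = - (w^2) * P * ((c * Q^2 - m * S^2 * c) * (ga * c + 1) + 2 * ga * S^2 * Q^2)"
  have e1: "(- w * P) * (c * Q * w * Q + - m * S * c * w * S) * ((ga * c + 1) * (ga * c + 1))
          - (- w * P) * (S * Q) * ((ga * (- S * Q * w) + 0) * (ga * c + 1) + (ga * (- S * Q * w) + 0) * (ga * c + 1))
        = (ga * c + 1) * Z"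
    unfolding Z_def by algebra
  have e2: "((ga * c + 1) * (ga * c + 1)) * ((ga * c + 1) * (ga * c + 1)) = (ga * c + 1) * (ga * c + 1)^3"
    by algebra
  show ?thesis unfolding e1 e2 Z_def[symmetric] using D by simp
qed

lemma expl_deriv:
  fixes al be ga w m :: real
  assumes m: "0 \<le> m" "m < 1" and g: "\<bar>ga\<bar> < 1"
  defines "K \<equiv> \<lambda>s. (al * jacobi_cn m (w * s) + be) / (ga * jacobi_cn m (w * s) + 1)"
    and "dK \<equiv> \<lambda>s. (- w * (al - be * ga)) * (sn m (w * s) * dn m (w * s)) / ((ga * jacobi_cn m (w * s) + 1) * (ga * jacobi_cn m (w * s) + 1))"
  shows "(K has_real_derivative dK s) (at s)"
    and "(dK has_real_derivative
     - (w^2) * (al - be*ga) * ((jacobi_cn m (w * s) * (dn m (w * s))^2 - m * (sn m (w * s))^2 * jacobi_cn m (w * s)) * (ga*jacobi_cn m (w * s)+1)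
        + 2*ga*(sn m (w * s))^2*(dn m (w * s))^2) / (ga*jacobi_cn m (w * s)+1)^3) (at s)"
proof -
  have D: "ga * jacobi_cn m u + 1 > 0" for u
  proof -
    have "\<bar>ga * jacobi_cn m u\<bar> \<le> \<bar>ga\<bar>" using cn_abs[of m u]
        mult_left_mono[of "\<bar>jacobi_cn m u\<bar>" 1 "\<bar>ga\<bar>"]
      by (simp add: abs_mult)
    then show ?thesis using g by linarith
  qed
  have nz: "ga * jacobi_cn m (w * s) + 1 \<noteq> 0" using D[of "w * s"] by simp
  have c: "((\<lambda>s. jacobi_cn m (w * s)) has_real_derivative - sn m (w * s) * dn m (w * s) * w) (at s)" for s
    using DERIV_chain2[OF cn_deriv[OF m] DERIV_cmult[OF DERIV_ident, of w]] by simp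
  have sd: "((\<lambda>s. sn m (w * s)) has_real_derivative jacobi_cn m (w * s) * dn m (w * s) * w) (at s)" for s
    using DERIV_chain2[OF sn_deriv[OF m] DERIV_cmult[OF DERIV_ident, of w]] by simp
  have dd: "((\<lambda>s. dn m (w * s)) has_real_derivative - m * sn m (w * s) * jacobi_cn m (w * s) * w) (at s)" for s
    using DERIV_chain2[OF dn_deriv[OF m] DERIV_cmult[OF DERIV_ident, of w]] by simp
  have cl: "((\<lambda>s. al * jacobi_cn m (w * s) + be) has_real_derivative al * (- sn m (w * s) * dn m (w * s) * w) + 0) (at s)"
    by (rule DERIV_add[OF DERIV_cmult[OF c] DERIV_const])
  have dl: "((\<lambda>s. ga * jacobi_cn m (w * s) + 1) has_real_derivative ga * (- sn m (w * s) * dn m (w * s) * w) + 0) (at s)"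
    by (rule DERIV_add[OF DERIV_cmult[OF c] DERIV_const])
  have "(K has_real_derivative ((al * (- sn m (w * s) * dn m (w * s) * w) + 0) * (ga * jacobi_cn m (w * s) + 1)
      - (al * jacobi_cn m (w * s) + be) * (ga * (- sn m (w * s) * dn m (w * s) * w) + 0))
      / ((ga * jacobi_cn m (w * s) + 1) * (ga * jacobi_cn m (w * s) + 1))) (at s)"
    unfolding K_def by (rule DERIV_divide[OF cl dl nz])
  then show "(K has_real_derivative dK s) (at s)"
    by (rule DERIV_cong) (unfold dK_def kalg, rule refl)
  have nl: "((\<lambda>s. (- w * (al - be * ga)) * (sn m (w * s) * dn m (w * s))) has_real_derivative
     (- w * (al - be * ga)) * (jacobi_cn m (w * s) * dn m (w * s) * w * dn m (w * s) + - m * sn m (w * s) * jacobi_cn m (w * s) * w * sn m (w * s))) (at s)"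
    by (rule DERIV_cmult[OF DERIV_mult[OF sd dd]])
  have ddl: "((\<lambda>s. (ga * jacobi_cn m (w * s) + 1) * (ga * jacobi_cn m (w * s) + 1)) has_real_derivative
     (ga * (- sn m (w * s) * dn m (w * s) * w) + 0) * (ga * jacobi_cn m (w * s) + 1) + (ga * (- sn m (w * s) * dn m (w * s) * w) + 0) * (ga * jacobi_cn m (w * s) + 1)) (at s)"
    by (rule DERIV_mult[OF dl dl])
  have nz2: "(ga * jacobi_cn m (w * s) + 1) * (ga * jacobi_cn m (w * s) + 1) \<noteq> 0" using nz by simp
  show "(dK has_real_derivative
     - (w^2) * (al - be*ga) * ((jacobi_cn m (w * s) * (dn m (w * s))^2 - m * (sn m (w * s))^2 * jacobi_cn m (w * s)) * (ga*jacobi_cn m (w * s)+1)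
        + 2*ga*(sn m (w * s))^2*(dn m (w * s))^2) / (ga*jacobi_cn m (w * s)+1)^3) (at s)"
    unfolding dK_def
    by (rule DERIV_cong[OF DERIV_divide[OF nl ddl nz2]]) (rule qalg2[OF nz])
qed

lemma gronwall0:
  fixes e e' :: "real \<Rightarrow> real" and a b C x :: real
  assumes "a \<le> 0" "0 \<le> b" and d: "\<And>x. a \<le> x \<Longrightarrow> x \<le> b \<Longrightarrow> (e has_real_derivative e' x) (at x)"
    and bnd: "\<And>x. a \<le> x \<Longrightarrow> x \<le> b \<Longrightarrow> \<bar>e' x\<bar> \<le> C * e x"
    and nn: "\<And>x. a \<le> x \<Longrightarrow> x \<le> b \<Longrightarrow> 0 \<le> e x" and e0: "e 0 = 0"
    and x: "a \<le> x" "x \<le> b"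
  shows "e x = 0"
proof (cases "0 \<le> x")
  case True
  have "(\<lambda>y. e y * exp (- C * y)) x \<le> (\<lambda>y. e y * exp (- C * y)) 0"
  proof (rule DERIV_nonpos_imp_nonincreasing[OF True])
    fix y assume y: "0 \<le> y" "y \<le> x"
    have "((\<lambda>y. e y * exp (- C * y)) has_real_derivative e' y * exp (- C * y) + e y * (exp (- C * y) * (- C))) (at y)"
      using y x \<open>a \<le> 0\<close> by (auto intro!: derivative_eq_intros d)
    moreover have "e' y * exp (- C * y) + e y * (exp (- C * y) * (- C)) = (e' y - C * e y) * exp (- C * y)"
      by (simp add: algebra_simps)
    moreover have "e' y - C * e y \<le> 0" using bnd[of y] y x \<open>a \<le> 0\<close> by auto
    ultimately show "\<exists>z. ((\<lambda>y. e y * exp (- C * y)) has_real_derivative z) (at y) \<and> z \<le> 0"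
      by (metis exp_gt_zero mult_nonpos_nonneg less_imp_le)
  qed
  then have "e x \<le> 0" using e0 by (simp add: mult_le_0_iff)
  then show ?thesis using nn[OF x] by linarith
next
  case False
  have "(\<lambda>y. e y * exp (C * y)) x \<le> (\<lambda>y. e y * exp (C * y)) 0"
  proof (rule DERIV_nonneg_imp_nondecreasing[of x 0 "\<lambda>y. e y * exp (C * y)"])
    show "x \<le> 0" using False by simp
    fix y assume y: "x \<le> y" "y \<le> 0"
    have "((\<lambda>y. e y * exp (C * y)) has_real_derivative e' y * exp (C * y) + e y * (exp (C * y) * C)) (at y)"
      using y x \<open>0 \<le> b\<close> by (auto intro!: derivative_eq_intros d)
    moreover have "e' y * exp (C * y) + e y * (exp (C * y) * C) = (e' y + C * e y) * exp (C * y)"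
      by (simp add: algebra_simps)
    moreover have "e' y + C * e y \<ge> 0" using bnd[of y] y x \<open>0 \<le> b\<close> by auto
    ultimately show "\<exists>z. ((\<lambda>y. e y * exp (C * y)) has_real_derivative z) (at y) \<and> z \<ge> 0"
      by (metis exp_gt_zero zero_le_mult_iff less_imp_le)
  qed
  then have "e x \<le> 0" using e0 by (simp add: mult_le_0_iff)
  then show ?thesis using nn[OF x] by linarith
qed

lemma half_abs_aux:
  fixes X Y lam :: real assumes "X \<le> Y" "-X \<le> Y" shows "\<bar>X/2 + lam\<bar> \<le> Y/2 + \<bar>lam\<bar>"
  using assms by (simp add: abs_le_iff) linarith

lemma bound_aux:
  fixes k h z M lam mu :: real
  assumes "\<bar>k\<bar> \<le> M" "\<bar>h\<bar> \<le> M"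
  shows "\<bar>2*(k-h)* z + 2* z*((- (k^3)/2 - lam*k + mu) - (- (h^3)/2 - lam*h + mu))\<bar>
        \<le> (1 + 3*M^2/2 + \<bar>lam\<bar>) * ((k-h)^2 + z^2)"
proof -
  have g: "(- (k^3)/2 - lam*k + mu) - (- (h^3)/2 - lam*h + mu) = -(k-h)*((k^2+k*h+h^2)/2 + lam)"
    by (simp add: field_simps power3_eq_cube power2_eq_square)
  have M0: "0 \<le> M" using assms by linarith
  have k2: "\<bar>k^2\<bar> \<le> M^2" using power_mono[OF assms(1) abs_ge_zero, of 2] by simp
  have h2: "\<bar>h^2\<bar> \<le> M^2" using power_mono[OF assms(2) abs_ge_zero, of 2] by simp
  have kh: "\<bar>k*h\<bar> \<le> M^2" using mult_mono[OF assms M0 abs_ge_zero] by (simp add: abs_mult power2_eq_square)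
  define L where "L = 3*M^2/2 + \<bar>lam\<bar>"
  have q: "\<bar>(k^2+k*h+h^2)/2 + lam\<bar> \<le> L"
  proof -
    have z: "0 \<le> k^2" "0 \<le> h^2" by simp_all
    have w: "k^2 \<le> M^2" "h^2 \<le> M^2" "k*h \<le> M^2" "-(k*h) \<le> M^2"
      using k2 h2 kh by (auto simp: abs_le_iff)
    have A: "k^2 + k*h + h^2 \<le> 3*M^2" using w by linarith
    have B: "-(k^2 + k*h + h^2) \<le> 3*M^2" using w z zero_le_power2[of M] by linarith
    show ?thesis unfolding L_def by (rule half_abs_aux[OF A B])
  qed
  have L0: "0 \<le> L" by (simp add: L_def)
  have uv: "2*\<bar>k-h\<bar>*\<bar>z\<bar> \<le> (k-h)^2 + z^2"
    using zero_le_power2[of "\<bar>k-h\<bar> - \<bar>z\<bar>"] by (simp add: power2_eq_square algebra_simps)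
  have "\<bar>2*(k-h)* z + 2* z*(-(k-h)*((k^2+k*h+h^2)/2 + lam))\<bar>
        \<le> \<bar>2*(k-h)*z\<bar> + \<bar>2*z*(-(k-h)*((k^2+k*h+h^2)/2 + lam))\<bar>"
    by (rule abs_triangle_ineq)
  also have "\<dots> = 2*\<bar>k-h\<bar>*\<bar>z\<bar> + 2*\<bar>k-h\<bar>*\<bar>z\<bar>*\<bar>(k^2+k*h+h^2)/2 + lam\<bar>"
    by (simp only: abs_mult abs_minus_cancel abs_numeral) (simp only: mult_ac)
  also have "\<dots> \<le> 2*\<bar>k-h\<bar>*\<bar>z\<bar> + 2*\<bar>k-h\<bar>*\<bar>z\<bar>*L"
    using q by (intro add_left_mono mult_left_mono) auto
  also have "\<dots> = (1 + L) * (2*\<bar>k-h\<bar>*\<bar>z\<bar>)" by (simp add: algebra_simps)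
  also have "\<dots> \<le> (1 + L) * ((k-h)^2 + z^2)" using uv L0 by (intro mult_left_mono) auto
  finally show ?thesis unfolding g L_def by (simp add: add.assoc)
qed

lemma uniq:
  assumes s1: "curv_ode_sol mu lam kM k dk I" and s2: "curv_ode_sol mu lam kM h dh I" and t: "t \<in> I"
  shows "k t = h t"
proof -
  from s1 have I: "is_interval I" "0 \<in> I" and k0: "k 0 = kM" "dk 0 = 0"
    and dk: "\<And>s. s \<in> I \<Longrightarrow> (k has_real_derivative dk s) (at s)"
    and ddk: "\<And>s. s \<in> I \<Longrightarrow> (dk has_real_derivative (- ((k s) ^ 3) / 2 - lam * k s + mu)) (at s)"
    by (auto simp: curv_ode_sol_def)
  from s2 have h0: "h 0 = kM" "dh 0 = 0"
    and dh: "\<And>s. s \<in> I \<Longrightarrow> (h has_real_derivative dh s) (at s)"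
    and ddh: "\<And>s. s \<in> I \<Longrightarrow> (dh has_real_derivative (- ((h s) ^ 3) / 2 - lam * h s + mu)) (at s)"
    by (auto simp: curv_ode_sol_def)
  define a where "a = min 0 t"
  define b where "b = max 0 t"
  have sub: "x \<in> I" if "a \<le> x" "x \<le> b" for x
  proof (cases "0 \<le> t")
    case True then show ?thesis using mem_is_interval_1_I[OF I(1) I(2) t, of x] that by (auto simp: a_def b_def)
  next
    case False then show ?thesis using mem_is_interval_1_I[OF I(1) t I(2), of x] that by (auto simp: a_def b_def)
  qed
  have cont: "continuous_on {a..b} (\<lambda>x. \<bar>k x\<bar> + \<bar>h x\<bar>)"
    using sub dk dh
    by (intro continuous_at_imp_continuous_on ballI continuous_intros) (auto intro: DERIV_isCont)
  have ex: "\<exists>x\<in>{a..b}. \<forall>y\<in>{a..b}. \<bar>k y\<bar> + \<bar>h y\<bar> \<le> \<bar>k x\<bar> + \<bar>h x\<bar>"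
    using continuous_attains_sup[OF compact_Icc _ cont] by (simp add: a_def b_def)
  obtain x0 where "x0 \<in> {a..b}" and mx: "\<forall>y\<in>{a..b}. \<bar>k y\<bar> + \<bar>h y\<bar> \<le> \<bar>k x0\<bar> + \<bar>h x0\<bar>"
    using ex by blast
  define M where "M = \<bar>k x0\<bar> + \<bar>h x0\<bar>"
  have kM': "\<bar>k y\<bar> \<le> M" "\<bar>h y\<bar> \<le> M" if "a \<le> y" "y \<le> b" for y
    using mx that unfolding M_def by force+
  define e where "e x = (k x - h x)^2 + (dk x - dh x)^2" for x
  define e' where "e' x = 2*(k x - h x)*(dk x - dh x) + 2*(dk x - dh x)*((- ((k x)^3)/2 - lam * k x + mu) - (- ((h x)^3)/2 - lam * h x + mu))" for x
  have de: "(e has_real_derivative e' x) (at x)" if "a \<le> x" "x \<le> b" for x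
    unfolding e_def e'_def using sub[OF that]
    by (auto intro!: derivative_eq_intros dk dh ddk ddh simp: field_simps)
  have "e t = 0"
  proof (rule gronwall0[where e=e and e'=e' and a=a and b=b and C="1 + 3*M^2/2 + \<bar>lam\<bar>" and x=t])
    show "a \<le> 0" "0 \<le> b" "a \<le> t" "t \<le> b" by (auto simp: a_def b_def)
    show "e 0 = 0" by (simp add: e_def k0 h0)
    fix x assume x: "a \<le> x" "x \<le> b"
    show "(e has_real_derivative e' x) (at x)" by (rule de[OF x])
    show "0 \<le> e x" by (simp add: e_def)
    show "\<bar>e' x\<bar> \<le> (1 + 3*M^2/2 + \<bar>lam\<bar>) * e x"
      unfolding e_def e'_def by (rule bound_aux) (use kM'[OF x] in auto)
  qed
  then show ?thesis unfolding e_def by (simp add: add_nonneg_eq_0_iff)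
qed

theorem mainTheorem16:
  fixes mu lam kM :: real and k dk :: "real \<Rightarrow> real" and I :: "real set"
  assumes "mu > 0" and "lam \<ge> 0"
    and sol: "curv_ode_maximal_sol mu lam kM k dk I"
    and nonconst: "\<exists>s\<in>I. k s \<noteq> kM"
    and kmax: "\<forall>s\<in>I. k s \<le> kM"
  shows "I = UNIV \<and> bounded (range k) \<and>
    (\<exists>\<alpha> \<beta> \<gamma> \<omega> m :: real. -1 < \<gamma> \<and> \<gamma> < 0 \<and> \<omega> > 0 \<and> 0 < m \<and> m < 1 \<and>
       (\<forall>s. k s = (\<alpha> * jacobi_cn m (\<omega> * s) + \<beta>) / (\<gamma> * jacobi_cn m (\<omega> * s) + 1)))"
proof -
  note mu = \<open>mu > 0\<close> and lam = \<open>lam \<ge> 0\<close>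
  define g where "g x = - (x^3)/2 - lam*x + mu" for x
  from sol have s: "curv_ode_sol mu lam kM k dk I"
    and maxl: "\<And>h dh J. curv_ode_sol mu lam kM h dh J \<Longrightarrow> J \<subseteq> I"
    by (auto simp: curv_ode_maximal_sol_def)
  from s have I: "open I" "is_interval I" "0 \<in> I" and k0: "k 0 = kM" "dk 0 = 0"
    and dk: "\<And>s. s \<in> I \<Longrightarrow> (k has_real_derivative dk s) (at s)"
    and ddk: "\<And>s. s \<in> I \<Longrightarrow> (dk has_real_derivative (- ((k s) ^ 3) / 2 - lam * k s + mu)) (at s)"
    by (auto simp: curv_ode_sol_def)
  have gneg: "g kM < 0"
  proof (rule ccontr)
    assume "\<not> g kM < 0"
    then consider "g kM = 0" | "g kM > 0" by linarith
    then show False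
    proof cases
      case 1
      have "curv_ode_sol mu lam kM (\<lambda>_. kM) (\<lambda>_. 0) I"
        using I 1 by (auto simp: curv_ode_sol_def g_def)
      then have "\<forall>t\<in>I. k t = kM" using uniq[OF s] by metis
      with nonconst show False by auto
    next
      case 2
      have "(dk has_real_derivative g kM) (at 0)" using ddk[OF I(3)] k0 by (simp add: g_def)
      from DERIV_pos_inc_right[OF this 2] obtain d where d: "d > 0" "\<And>h. h > 0 \<Longrightarrow> h < d \<Longrightarrow> dk 0 < dk (0 + h)"
        by blast
      obtain e where e: "e > 0" "ball 0 e \<subseteq> I" using I(1) I(3) open_contains_ball by blast
      define h where "h = min d e / 2"
      have h: "0 < h" "h < d" "h < e" using d e by (auto simp: h_def)
      have inI: "x \<in> I" if "0 \<le> x" "x \<le> h" for x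
        using e(2) that h by (auto simp: dist_real_def)
      obtain z where z: "0 < z" "z < h" "k h - k 0 = (h - 0) * dk z"
        using MVT2[of 0 h k dk] h inI dk by auto
      have "dk z > 0" using d(2)[of z] z h k0 by simp
      then have "h * dk z > 0" using h by simp
      then have "k h > kM" using z k0 by simp
      moreover have "k h \<le> kM" using kmax inI[of h] h by auto
      ultimately show False by simp
    qed
  qed
  have kMpos: "kM > 0"
  proof (rule ccontr)
    assume "\<not> kM > 0"
    then have k: "kM \<le> 0" by simp
    have "kM^3 \<le> 0" using k by (simp add: power3_eq_cube mult_nonpos_nonpos mult_nonneg_nonpos)
    moreover have "lam * kM \<le> 0" using k lam by (simp add: mult_nonneg_nonpos)
    ultimately have "g kM \<ge> mu" unfolding g_def by linarith
    with gneg mu show False by simp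
  qed
  define hh where "hh x = (kM + x)*(4*lam + kM^2 + x^2)/8 - mu" for x
  have hm: "hh (-kM) < 0" using mu by (simp add: hh_def)
  have hp: "hh kM > 0"
  proof -
    have "hh kM = - g kM" by (simp add: hh_def g_def power2_eq_square power3_eq_cube field_simps)
    then show ?thesis using gneg by simp
  qed
  have hc: "isCont hh x" for x unfolding hh_def by (auto intro!: continuous_intros)
  obtain km where km: "-kM \<le> km" "km \<le> kM" "hh km = 0"
    using IVT[of hh "-kM" 0 kM] hm hp kMpos hc by auto
  have km1: "-kM < km" using km hm by (cases "km = -kM") auto
  have km2: "km < kM" using km hp by (cases "km = kM") auto
  define A where "A = sqrt (kM^2 + kM*(kM+km) + (4*lam + (kM+km)^2 - kM*km))"
  define B where "B = sqrt (km^2 + km*(kM+km) + (4*lam + (kM+km)^2 - kM*km))"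
  note P = params[OF lam kMpos km1 km2 A_def B_def]
  have mueq: "mu = (kM+km)*(4*lam+(kM+km)^2-2*kM*km)/8"
    using km(3) by (simp add: hh_def power2_eq_square algebra_simps)
  define al where "al = (kM*B - km*A)/(A+B)"
  define be where "be = (kM*B + km*A)/(A+B)"
  define ga where "ga = (B-A)/(A+B)"
  define m where "m = ((kM-km)^2 - (A-B)^2)/(4*A*B)"
  define w where "w = sqrt (A*B) / 2"
  have Ap: "A > 0" and Bp: "B > 0" using P by auto
  have ga1: "-1 < ga" "ga < 0" using Ap Bp P(5) by (auto simp: ga_def field_simps)
  have gaabs: "\<bar>ga\<bar> < 1" using ga1 by simp
  have m01: "0 < m" "m < 1" using P(6,7) by (simp_all add: m_def)
  have wpos: "w > 0" using Ap Bp by (simp add: w_def)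
  have w2: "w^2 = A*B/4" using Ap Bp by (simp add: w_def power_divide)
  define K where "K = (\<lambda>s. (al * jacobi_cn m (w * s) + be) / (ga * jacobi_cn m (w * s) + 1))"
  define dK where "dK = (\<lambda>s. (- w * (al - be * ga)) * (sn m (w * s) * dn m (w * s)) / ((ga * jacobi_cn m (w * s) + 1) * (ga * jacobi_cn m (w * s) + 1)))"
  have D: "ga * jacobi_cn m u + 1 > 0" for u
  proof -
    have "\<bar>ga * jacobi_cn m u\<bar> \<le> \<bar>ga\<bar>" using cn_abs[of m u]
        mult_left_mono[of "\<bar>jacobi_cn m u\<bar>" 1 "\<bar>ga\<bar>"]
      by (simp add: abs_mult)
    then show ?thesis using gaabs by linarith
  qed
  have m0: "0 \<le> m" "m < 1" using m01 by auto
  have solK: "curv_ode_sol mu lam kM K dK J" if J: "open J" "is_interval J" "0 \<in> J" for J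
  proof -
    have K0: "K 0 = kM"
    proof -
      have "K 0 = (al + be) / (ga + 1)" by (simp add: K_def cn_zero[OF m0])
      also have "\<dots> = kM"
      proof -
        have AB0: "A + B \<noteq> 0" using Ap Bp by simp
        have e1: "al + be = (2*kM*B)/(A+B)" unfolding al_def be_def
          by (simp add: add_divide_distrib[symmetric] algebra_simps)
        have e2: "ga + 1 = (2*B)/(A+B)" unfolding ga_def using AB0 by (simp add: field_simps)
        have "al + be = kM * (ga + 1)" unfolding e1 e2 by simp
        moreover have "ga + 1 \<noteq> 0" using ga1 by simp
        ultimately show ?thesis by simp
      qed
      finally show ?thesis .
    qed
    have dK0: "dK 0 = 0" by (simp add: dK_def sn_zero[OF m0])
    have d1: "(K has_real_derivative dK s) (at s)" for s
      unfolding K_def dK_def by (rule expl_deriv(1)[OF m0 gaabs])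
    have d2: "(dK has_real_derivative (- ((K s) ^ 3) / 2 - lam * K s + mu)) (at s)" for s
    proof -
      have e: "- (w^2) * (al - be*ga) * ((jacobi_cn m (w * s) * (dn m (w * s))^2 - m * (sn m (w * s))^2 * jacobi_cn m (w * s)) * (ga*jacobi_cn m (w * s)+1)
        + 2*ga*(sn m (w * s))^2*(dn m (w * s))^2) / (ga*jacobi_cn m (w * s)+1)^3
        = - ((K s) ^ 3) / 2 - lam * K s + mu"
        unfolding K_def mueq
        by (rule param_ode[OF P(3) P(4) Ap Bp al_def be_def ga_def m_def w2])
           (use D[of "w * s"] cn_sn[of m "w * s"] dn_sq[OF m0(2), of "w * s"] in auto)
      show ?thesis using expl_deriv(2)[OF m0 gaabs, where al=al and be=be and w=w and s=s] unfolding e K_def dK_def .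
    qed
    show ?thesis using J K0 dK0 d1 d2 by (auto simp: curv_ode_sol_def)
  qed
  have IU: "I = UNIV" using maxl[OF solK[of UNIV]] by auto
  have kK: "k t = K t" for t using uniq[OF s solK[OF I], of t] IU by simp
  have bnd: "\<bar>K t\<bar> \<le> (\<bar>al\<bar> + \<bar>be\<bar>) / (1 - \<bar>ga\<bar>)" for t
  proof -
    define c where "c = jacobi_cn m (w * t)"
    have c1: "\<bar>c\<bar> \<le> 1" by (simp add: c_def cn_abs)
    have num: "\<bar>al * c + be\<bar> \<le> \<bar>al\<bar> + \<bar>be\<bar>"
    proof -
      have "\<bar>al * c\<bar> \<le> \<bar>al\<bar>" using c1 mult_left_mono[of "\<bar>c\<bar>" 1 "\<bar>al\<bar>"] by (simp add: abs_mult)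
      then show ?thesis using abs_triangle_ineq[of "al*c" be] by linarith
    qed
    have den: "1 - \<bar>ga\<bar> \<le> ga * c + 1"
    proof -
      have "\<bar>ga * c\<bar> \<le> \<bar>ga\<bar>" using c1 mult_left_mono[of "\<bar>c\<bar>" 1 "\<bar>ga\<bar>"] by (simp add: abs_mult)
      then show ?thesis by linarith
    qed
    have "\<bar>K t\<bar> = \<bar>al * c + be\<bar> / (ga * c + 1)" using D[of "w * t"] by (simp add: K_def c_def)
    also have "\<dots> \<le> (\<bar>al\<bar> + \<bar>be\<bar>) / (1 - \<bar>ga\<bar>)"
      by (rule frac_le) (use num den gaabs in auto)
    finally show ?thesis .
  qed
  have "bounded (range k)"
    unfolding bounded_iff using bnd kK by (auto simp: real_norm_def)
  moreover have "\<forall>s. k s = (al * jacobi_cn m (w * s) + be) / (ga * jacobi_cn m (w * s) + 1)"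
    using kK by (simp add: K_def)
  ultimately show ?thesis using IU ga1 wpos m01 by blast
qed

end
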